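(* For every $[\mu]\in\mathbb PV_n$ one has $F_n([\mu])\ge\frac4n$, so $\frac4n$ is the minimum value of $F_n:\mathbb PV_n\to\mathbb R$. Moreover, $F_n([\mu])=\frac4n$ if and only if $[\mu]$ is a critical point of $F_n$ of type $(0;n)$, i.e. if and only if $\mathrm M_\mu$ is a real multiple of the identity.
   Context: $V_n$ is the space of bilinear maps $\mu:\mathbb C^n\times\mathbb C^n\to\mathbb C^n$ with standard Hermitian structures. $L^\mu_XY=\mu(X,Y)$, $R^\mu_XY=\mu(Y,X)$, $\mathrm M_\mu=2\sum_i L^\mu_{X_i}(L^\mu_{X_i})^*-2\sum_i (L^\mu_{X_i})^*L^\mu_{X_i}-2\sum_i (R^\mu_{X_i})^*R^\mu_{X_i}$ ($\{X_i\}$ orthonormal), $\|\mu\|^2=\sum_{i,j}\|\mu(X_i,X_j)\|^2$, $F_n([\mu])=\operatorname{tr}\mathrm M_\mu^2/\|\mu\|^4$. $[\mu]$ is a critical point of $F_n$ iff $\mathrm M_\mu=c_\mu I+D_\mu$ with $c_\mu\in\mathbb R$, $D_\mu$ a derivation of $\mu$; it is of type $(0;n)$ when moreover $D_\mu=0$. *)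

theory Defs
  imports "HOL-Analysis.Analysis"
begin

text \<open>A bilinear map mu on C^n, with n = CARD('n), is encoded by its structure
constants with respect to the standard (orthonormal) basis e_i:
  mu(e_i, e_j) = sum_k (mu i j k) e_k.
Bilinear maps correspond bijectively to such families.\<close>

type_synonym 'n bilin = "'n \<Rightarrow> 'n \<Rightarrow> 'n \<Rightarrow> complex"

text \<open>Matrix of L_{e_i} (left multiplication): column j is mu(e_i,e_j).\<close>
definition Lmat :: "'n::finite bilin \<Rightarrow> 'n \<Rightarrow> complex^'n^'n" where
  "Lmat mu i = (\<chi> k j. mu i j k)"

text \<open>Matrix of R_{e_i} (right multiplication): column j is mu(e_j,e_i).\<close>
definition Rmat :: "'n::finite bilin \<Rightarrow> 'n \<Rightarrow> complex^'n^'n" where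
  "Rmat mu i = (\<chi> k j. mu j i k)"

definition cadj :: "complex^'n^'m \<Rightarrow> complex^'m^'n" where
  "cadj A = (\<chi> i j. cnj (A $ j $ i))"

definition Mmu :: "'n::finite bilin \<Rightarrow> complex^'n^'n" where
  "Mmu mu = (2::real) *\<^sub>R (\<Sum>i\<in>UNIV. Lmat mu i ** cadj (Lmat mu i))
          - (2::real) *\<^sub>R (\<Sum>i\<in>UNIV. cadj (Lmat mu i) ** Lmat mu i)
          - (2::real) *\<^sub>R (\<Sum>i\<in>UNIV. cadj (Rmat mu i) ** Rmat mu i)"

definition normsq :: "'n::finite bilin \<Rightarrow> real" where
  "normsq mu = (\<Sum>i\<in>UNIV. \<Sum>j\<in>UNIV. \<Sum>k\<in>UNIV. (cmod (mu i j k))\<^sup>2)"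

text \<open>F_n([mu]) = tr(M_mu^2)/||mu||^4; tr(M_mu^2) is real since M_mu is Hermitian.\<close>
definition Fn :: "'n::finite bilin \<Rightarrow> real" where
  "Fn mu = Re (trace (Mmu mu ** Mmu mu)) / (normsq mu)\<^sup>2"

end

theory Submission imports Defs begin

lemma M_entry:
  fixes mu :: "'n::finite bilin"
  shows "Mmu mu $ k $ l =
     2 * (\<Sum>i\<in>UNIV. \<Sum>j\<in>UNIV. mu i j k * cnj (mu i j l))
   - 2 * (\<Sum>i\<in>UNIV. \<Sum>j\<in>UNIV. cnj (mu i k j) * mu i l j)
   - 2 * (\<Sum>i\<in>UNIV. \<Sum>j\<in>UNIV. cnj (mu k i j) * mu l i j)"
  by (simp add: Mmu_def sum_component matrix_matrix_mult_def cadj_def Lmat_def Rmat_def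
       scaleR_conv_of_real)

lemma M_herm:
  fixes mu :: "'n::finite bilin"
  shows "cnj (Mmu mu $ k $ l) = Mmu mu $ l $ k"
  by (simp add: M_entry mult.commute)

lemma cnj_sq1: "z * cnj z = complex_of_real ((cmod z)\<^sup>2)"
  by (rule complex_norm_square[symmetric])
lemma cnj_sq2: "cnj z * z = complex_of_real ((cmod z)\<^sup>2)"
  by (metis complex_norm_square mult.commute)

lemma M_diag:
  fixes mu :: "'n::finite bilin"
  shows "Mmu mu $ k $ k = complex_of_real (
     2 * (\<Sum>i\<in>UNIV. \<Sum>j\<in>UNIV. (cmod (mu i j k))\<^sup>2)
   - 2 * (\<Sum>i\<in>UNIV. \<Sum>j\<in>UNIV. (cmod (mu i k j))\<^sup>2)
   - 2 * (\<Sum>i\<in>UNIV. \<Sum>j\<in>UNIV. (cmod (mu k i j))\<^sup>2))"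
  by (simp add: M_entry cnj_sq1 cnj_sq2 of_real_sum)


lemma trace_decomp:
  fixes M :: "complex^'n::finite^'n"
  assumes H: "\<And>k l. cnj (M$k$l) = M$l$k"
  defines "a \<equiv> (\<Sum>k\<in>UNIV. Re (M$k$k)) / real CARD('n)"
  shows "Re (trace (M ** M)) = (\<Sum>k\<in>UNIV. Re (M$k$k))\<^sup>2 / real CARD('n)
          + (\<Sum>k\<in>UNIV. (Re (M$k$k) - a)\<^sup>2)
          + (\<Sum>k\<in>UNIV. \<Sum>l\<in>UNIV. (if l = k then 0 else (cmod (M$k$l))\<^sup>2))"
proof -
  let ?d = "\<lambda>k. Re (M$k$k)"
  let ?n = "real CARD('n)"
  have npos: "?n > 0" by simp
  have tr: "Re (trace (M ** M)) = (\<Sum>k\<in>UNIV. \<Sum>l\<in>UNIV. (cmod (M$k$l))\<^sup>2)"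
  proof -
    have "trace (M ** M) = (\<Sum>k\<in>UNIV. \<Sum>l\<in>UNIV. M$k$l * cnj (M$k$l))"
      by (simp add: trace_def matrix_matrix_mult_def H)
    also have "\<dots> = (\<Sum>k\<in>UNIV. \<Sum>l\<in>UNIV. complex_of_real ((cmod (M$k$l))\<^sup>2))"
      by (simp add: cnj_sq1)
    finally show ?thesis by (simp add: of_real_sum[symmetric] del: of_real_sum)
  qed
  have diag: "(cmod (M$k$k))\<^sup>2 = (?d k)\<^sup>2" for k
  proof -
    have "Im (M$k$k) = 0" using arg_cong[OF H[of k k], of Im] by simp
    then show ?thesis by (simp add: cmod_def)
  qed
  have row: "(\<Sum>l\<in>UNIV. (cmod (M$k$l))\<^sup>2) = (?d k)\<^sup>2 + (\<Sum>l\<in>UNIV. (if l = k then 0 else (cmod (M$k$l))\<^sup>2))" for k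
  proof -
    have "(\<Sum>l\<in>UNIV. (cmod (M$k$l))\<^sup>2) = (\<Sum>l\<in>UNIV. (if l = k then (cmod (M$k$k))\<^sup>2 else 0) + (if l = k then 0 else (cmod (M$k$l))\<^sup>2))"
      by (rule sum.cong) auto
    also have "\<dots> = (cmod (M$k$k))\<^sup>2 + (\<Sum>l\<in>UNIV. (if l = k then 0 else (cmod (M$k$l))\<^sup>2))"
      by (simp add: sum.distrib)
    finally show ?thesis using diag by simp
  qed
  have var: "(\<Sum>k\<in>UNIV. (?d k)\<^sup>2) = (\<Sum>k\<in>UNIV. ?d k)\<^sup>2 / ?n + (\<Sum>k\<in>UNIV. (?d k - a)\<^sup>2)"
  proof -
    have "(\<Sum>k\<in>UNIV. (?d k - a)\<^sup>2) = (\<Sum>k\<in>UNIV. (?d k)\<^sup>2) - 2 * a * (\<Sum>k\<in>UNIV. ?d k) + ?n * a\<^sup>2"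
      by (simp add: power2_diff sum.distrib sum_subtractf sum_distrib_left mult_ac)
    also have "\<dots> = (\<Sum>k\<in>UNIV. (?d k)\<^sup>2) - (\<Sum>k\<in>UNIV. ?d k)\<^sup>2 / ?n"
      using npos by (simp add: a_def field_simps power2_eq_square)
    finally show ?thesis by simp
  qed
  show ?thesis using tr row var by (simp add: sum.distrib)
qed


lemma trace_M:
  fixes mu :: "'n::finite bilin"
  shows "(\<Sum>k\<in>UNIV. Re (Mmu mu $ k $ k)) = - 2 * normsq mu"
proof -
  have A: "(\<Sum>k\<in>UNIV. \<Sum>i\<in>UNIV. \<Sum>j\<in>UNIV. (cmod (mu i j k))\<^sup>2) = normsq mu"
  proof -
    have "(\<Sum>k\<in>UNIV. \<Sum>i\<in>UNIV. \<Sum>j\<in>UNIV. (cmod (mu i j k))\<^sup>2)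
       = (\<Sum>i\<in>UNIV. \<Sum>k\<in>UNIV. \<Sum>j\<in>UNIV. (cmod (mu i j k))\<^sup>2)" by (rule sum.swap)
    also have "\<dots> = normsq mu" unfolding normsq_def by (rule sum.cong[OF refl], rule sum.swap)
    finally show ?thesis .
  qed
  have B: "(\<Sum>k\<in>UNIV. \<Sum>i\<in>UNIV. \<Sum>j\<in>UNIV. (cmod (mu i k j))\<^sup>2) = normsq mu"
    unfolding normsq_def by (rule sum.swap)
  have C: "(\<Sum>k\<in>UNIV. \<Sum>i\<in>UNIV. \<Sum>j\<in>UNIV. (cmod (mu k i j))\<^sup>2) = normsq mu"
    unfolding normsq_def ..
  show ?thesis
    by (simp only: M_diag Re_complex_of_real sum_subtractf sum_distrib_left[symmetric] A B C)
qed

lemma normsq_pos: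
  fixes mu :: "'n::finite bilin"
  assumes "mu \<noteq> (\<lambda>_ _ _. 0)"
  shows "normsq mu > 0"
proof -
  obtain i j k where ne: "mu i j k \<noteq> 0" using assms by (metis ext)
  have "(cmod (mu i j k))\<^sup>2 \<le> (\<Sum>k\<in>UNIV. (cmod (mu i j k))\<^sup>2)"
    by (rule member_le_sum) auto
  also have "\<dots> \<le> (\<Sum>j\<in>UNIV. \<Sum>k\<in>UNIV. (cmod (mu i j k))\<^sup>2)"
    by (rule member_le_sum) (auto intro!: sum_nonneg)
  also have "\<dots> \<le> normsq mu" unfolding normsq_def
    by (rule member_le_sum) (auto intro!: sum_nonneg)
  finally have "(cmod (mu i j k))\<^sup>2 \<le> normsq mu" .
  moreover have "(cmod (mu i j k))\<^sup>2 > 0" using ne by simp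
  ultimately show ?thesis by linarith
qed


lemma main_mu:
  fixes mu :: "'n::finite bilin"
  assumes nz: "mu \<noteq> (\<lambda>_ _ _. 0)"
  shows "Fn mu \<ge> 4 / real CARD('n)
          \<and> (Fn mu = 4 / real CARD('n) \<longleftrightarrow> (\<exists>c::real. Mmu mu = c *\<^sub>R mat 1))"
proof -
  define M where "M = Mmu mu"
  define N where "N = normsq mu"
  define n where "n = real CARD('n)"
  define a where "a = (\<Sum>k\<in>UNIV. Re (M$k$k)) / n"
  define V where "V = (\<Sum>k\<in>UNIV. (Re (M$k$k) - a)\<^sup>2)"
  define E where "E = (\<Sum>k\<in>UNIV. \<Sum>l\<in>UNIV. (if l = k then 0 else (cmod (M$k$l))\<^sup>2))"
  have Npos: "N > 0" unfolding N_def using normsq_pos[OF nz] .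
  have npos: "n > 0" unfolding n_def by simp
  have H: "\<And>k l. cnj (M$k$l) = M$l$k" unfolding M_def by (rule M_herm)
  have D: "(\<Sum>k\<in>UNIV. Re (M$k$k)) = - 2 * N" unfolding M_def N_def by (rule trace_M)
  have dec: "Re (trace (M ** M)) = (-2*N)\<^sup>2 / n + V + E"
    using trace_decomp[OF H] unfolding V_def E_def a_def n_def D by simp
  have V0: "V \<ge> 0" unfolding V_def by (auto intro!: sum_nonneg)
  have E0: "E \<ge> 0" unfolding E_def by (auto intro!: sum_nonneg)
  have F: "Fn mu = 4 / n + (V + E) / N\<^sup>2"
    unfolding Fn_def M_def[symmetric] N_def[symmetric] dec
    using Npos npos by (simp add: field_simps power2_eq_square)
  have ge: "Fn mu \<ge> 4 / n" using F V0 E0 Npos by simp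
  have diagreal: "M$k$k = complex_of_real (Re (M$k$k))" for k
    unfolding M_def by (metis M_diag Re_complex_of_real)
  have eq: "(Fn mu = 4 / n) \<longleftrightarrow> (\<exists>c::real. M = c *\<^sub>R mat 1)"
  proof
    assume "Fn mu = 4 / n"
    then have "(V + E) / N\<^sup>2 = 0" using F by simp
    then have "V + E = 0" using Npos by simp
    then have "V = 0" "E = 0" using V0 E0 by linarith+
    from \<open>V = 0\<close> have Vk: "\<forall>k\<in>UNIV. (Re (M$k$k) - a)\<^sup>2 = 0"
      unfolding V_def by (subst sum_nonneg_eq_0_iff[symmetric]) auto
    from \<open>E = 0\<close> have Ek: "\<forall>k\<in>UNIV. (\<Sum>l\<in>UNIV. (if l = k then 0 else (cmod (M$k$l))\<^sup>2)) = 0"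
      unfolding E_def by (subst sum_nonneg_eq_0_iff[symmetric]) (auto intro!: sum_nonneg)
    have Ekl: "l \<noteq> k \<Longrightarrow> M$k$l = 0" for k l
    proof -
      assume "l \<noteq> k"
      have "\<forall>l\<in>UNIV. (if l = k then 0 else (cmod (M$k$l))\<^sup>2) = 0"
        using Ek by (subst sum_nonneg_eq_0_iff[symmetric]) auto
      then show ?thesis using \<open>l \<noteq> k\<close> by (metis UNIV_I norm_eq_zero zero_eq_power2)
    qed
    have "M = a *\<^sub>R mat 1"
    proof (subst vec_eq_iff, intro allI, subst vec_eq_iff, intro allI)
      fix k l
      show "M$k$l = (a *\<^sub>R mat 1)$k$l"
      proof (cases "l = k")
        case True
        then show ?thesis using Vk diagreal[of k] by (simp add: mat_def of_real_def)
      next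
        case False
        then show ?thesis using Ekl[OF False] by (simp add: mat_def)
      qed
    qed
    then show "\<exists>c::real. M = c *\<^sub>R mat 1" by blast
  next
    assume "\<exists>c::real. M = c *\<^sub>R mat 1"
    then obtain c where c: "M = c *\<^sub>R mat 1" by blast
    have Mkk: "Re (M$k$k) = c" for k using c by (simp add: mat_def)
    have Mkl: "l \<noteq> k \<Longrightarrow> M$k$l = 0" for k l using c by (simp add: mat_def)
    have "a = c" unfolding a_def Mkk using npos by (simp add: n_def)
    then have "V = 0" unfolding V_def Mkk by simp
    moreover have "E = 0" unfolding E_def by (rule sum.neutral, intro ballI, rule sum.neutral) (auto simp: Mkl)
    ultimately show "Fn mu = 4 / n" using F by simp
  qed
  show ?thesis using ge eq unfolding M_def n_def by simp
qed


definition mu0 :: "'n::finite bilin" where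
  "mu0 i j k = (if i = j \<and> j = k then 1 else 0)"

lemma dd: "(\<Sum>i\<in>UNIV. \<Sum>j\<in>UNIV. (if i = k \<and> j = k \<and> k = l then 1 else (0::complex)))
   = (if k = l then 1 else 0)" for k l :: "'n::finite"
proof -
  have "(\<Sum>j\<in>UNIV. (if i = k \<and> j = k \<and> k = l then 1 else (0::complex)))
        = (if i = k \<and> k = l then 1 else 0)" for i
  proof (cases "i = k \<and> k = l")
    case True then show ?thesis by (simp add: sum.delta')
  next
    case False then show ?thesis by (intro trans[OF sum.neutral]) auto
  qed
  then have "(\<Sum>i\<in>UNIV. \<Sum>j\<in>UNIV. (if i = k \<and> j = k \<and> k = l then 1 else (0::complex)))
     = (\<Sum>i\<in>UNIV. (if i = k \<and> k = l then 1 else (0::complex)))" by simp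
  also have "\<dots> = (if k = l then 1 else 0)"
  proof (cases "k = l")
    case True then show ?thesis by (simp add: sum.delta')
  next
    case False then show ?thesis by simp
  qed
  finally show ?thesis .
qed

lemma M_mu0: "Mmu (mu0 :: 'n::finite bilin) = (-2::real) *\<^sub>R mat 1"
proof (subst vec_eq_iff, intro allI, subst vec_eq_iff, intro allI)
  fix k l :: 'n
  have e1: "(\<Sum>i\<in>UNIV. \<Sum>j\<in>UNIV. mu0 i j k * cnj (mu0 i j l)) = (if k = l then 1 else 0)"
  proof -
    have "(\<Sum>i\<in>UNIV. \<Sum>j\<in>UNIV. mu0 i j k * cnj (mu0 i j l))
        = (\<Sum>i\<in>UNIV. \<Sum>j\<in>UNIV. (if i = k \<and> j = k \<and> k = l then 1 else (0::complex)))"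
      unfolding mu0_def by (intro sum.cong refl) auto
    also have "\<dots> = (if k = l then 1 else 0)" by (rule dd)
    finally show ?thesis .
  qed
  have e2: "(\<Sum>i\<in>UNIV. \<Sum>j\<in>UNIV. cnj (mu0 i k j) * mu0 i l j) = (if k = l then 1 else 0)"
  proof -
    have "(\<Sum>i\<in>UNIV. \<Sum>j\<in>UNIV. cnj (mu0 i k j) * mu0 i l j)
        = (\<Sum>i\<in>UNIV. \<Sum>j\<in>UNIV. (if i = k \<and> j = k \<and> k = l then 1 else (0::complex)))"
      unfolding mu0_def by (intro sum.cong refl) auto
    also have "\<dots> = (if k = l then 1 else 0)" by (rule dd)
    finally show ?thesis .
  qed
  have e3: "(\<Sum>i\<in>UNIV. \<Sum>j\<in>UNIV. cnj (mu0 k i j) * mu0 l i j) = (if k = l then 1 else 0)"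
  proof -
    have "(\<Sum>i\<in>UNIV. \<Sum>j\<in>UNIV. cnj (mu0 k i j) * mu0 l i j)
        = (\<Sum>i\<in>UNIV. \<Sum>j\<in>UNIV. (if i = k \<and> j = k \<and> k = l then 1 else (0::complex)))"
      unfolding mu0_def by (intro sum.cong refl) auto
    also have "\<dots> = (if k = l then 1 else 0)" by (rule dd)
    finally show ?thesis .
  qed
  show "Mmu mu0 $ k $ l = ((-2::real) *\<^sub>R mat 1) $ k $ l"
    unfolding M_entry e1 e2 e3 by (auto simp: mat_def scaleR_2)
qed

lemma mu0_nz: "(mu0 :: 'n::finite bilin) \<noteq> (\<lambda>_ _ _. 0)"
  by (auto simp: mu0_def fun_eq_iff)

theorem lemma4p5:
  fixes dummy :: "'n::finite"
  shows "(\<forall>mu :: 'n bilin. mu \<noteq> (\<lambda>_ _ _. 0) \<longrightarrow>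
            Fn mu \<ge> 4 / real CARD('n)
          \<and> (Fn mu = 4 / real CARD('n) \<longleftrightarrow> (\<exists>c::real. Mmu mu = c *\<^sub>R mat 1)))
       \<and> (\<exists>mu :: 'n bilin. mu \<noteq> (\<lambda>_ _ _. 0) \<and> Fn mu = 4 / real CARD('n))"
proof (rule conjI, intro allI impI)
  fix mu :: "'n bilin"
  assume "mu \<noteq> (\<lambda>_ _ _. 0)"
  then show "Fn mu \<ge> 4 / real CARD('n)
          \<and> (Fn mu = 4 / real CARD('n) \<longleftrightarrow> (\<exists>c::real. Mmu mu = c *\<^sub>R mat 1))"
    by (rule main_mu)
next
  have "Fn (mu0 :: 'n bilin) = 4 / real CARD('n)"
    using main_mu[OF mu0_nz] M_mu0 by blast
  then show "\<exists>mu :: 'n bilin. mu \<noteq> (\<lambda>_ _ _. 0) \<and> Fn mu = 4 / real CARD('n)"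
    using mu0_nz by blast
qed

end
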